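(* Let $L$ be a frame. The map $\nu(F)=\bigcap_{a\in F}\mathfrak o(a)$ restricts to an order isomorphism from $(\mathrm{Int}(\mathsf{SO}(L)),\sqsubseteq)$ onto $(\{\mathrm{fit}(S)\mid S\in\mathcal S_k(L)\},\subseteq)$, with inverse $S\mapsto\{a\in L\mid S\subseteq\mathfrak o(a)\}$.
   Context: A frame is a complete lattice $L$ with $(\bigvee A)\wedge b=\bigvee_{a\in A}(a\wedge b)$, Heyting implication $\to$. A sublocale is a subset $S\subseteq L$ closed under all meets with $a\to s\in S$ for $a\in L,s\in S$; sublocales form a coframe $\mathsf{Sl}(L)$ under inclusion with joins $\bigvee_i S_i=\{\bigwedge A\mid A\subseteq\bigcup_i S_i\}$. $\mathfrak o(a)=\{a\to b\mid b\in L\}$. $\mathrm{fit}(S)=\bigcap\{\mathfrak o(a)\mid S\subseteq\mathfrak o(a)\}$. A sublocale $S$ is compact if $S\subseteq\bigvee_{a\in A}\mathfrak o(a)$ implies $S\subseteq\mathfrak o(a_1)\vee\dots\vee\mathfrak o(a_n)$ for some $a_1,\dots,a_n\in A$; $\mathcal S_k(L)$ is the set of joins in $\mathsf{Sl}(L)$ of compact sublocales. Filters are nonempty up-closed subsets closed under finite meets, ordered by reverse inclusion $\sqsubseteq$; a filter $F$ is Scott-open if every directed $D$ with $\bigvee D\in F$ meets $F$; $\mathsf{SO}(L)$ is the set of Scott-open filters, and $\mathrm{Int}(\mathsf{SO}(L))$ the set of intersections of subfamilies of it (empty intersection $=L$). *)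

theory Defs
  imports Main
begin

definition is_frame :: "'a::complete_lattice itself \<Rightarrow> bool" where
  "is_frame _ \<longleftrightarrow> (\<forall>(A::'a set) b. inf (Sup A) b = (SUP a\<in>A. inf a b))"

definition himp :: "'a::complete_lattice \<Rightarrow> 'a \<Rightarrow> 'a" where
  "himp a b = Sup {c. inf c a \<le> b}"

definition sublocale_of :: "'a::complete_lattice set \<Rightarrow> bool" where
  "sublocale_of S \<longleftrightarrow> (\<forall>A. A \<subseteq> S \<longrightarrow> Inf A \<in> S) \<and> (\<forall>a s. s \<in> S \<longrightarrow> himp a s \<in> S)"

definition sl_join :: "'a::complete_lattice set set \<Rightarrow> 'a set" where
  "sl_join \<S> = {Inf A | A. A \<subseteq> \<Union>\<S>}"

definition open_sl :: "'a::complete_lattice \<Rightarrow> 'a set" where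
  "open_sl a = {himp a b | b. True}"

definition fit :: "'a::complete_lattice set \<Rightarrow> 'a set" where
  "fit S = \<Inter>{open_sl a | a. S \<subseteq> open_sl a}"

definition compact_sl :: "'a::complete_lattice set \<Rightarrow> bool" where
  "compact_sl S \<longleftrightarrow> sublocale_of S \<and>
     (\<forall>A. S \<subseteq> sl_join (open_sl ` A) \<longrightarrow>
        (\<exists>B. finite B \<and> B \<subseteq> A \<and> S \<subseteq> sl_join (open_sl ` B)))"

definition Sk :: "'a::complete_lattice set set" where
  "Sk = {sl_join \<C> | \<C>. \<C> \<subseteq> {S. compact_sl S}}"

definition is_filter :: "'a::complete_lattice set \<Rightarrow> bool" where
  "is_filter F \<longleftrightarrow> F \<noteq> {} \<and> (\<forall>a b. a \<in> F \<and> a \<le> b \<longrightarrow> b \<in> F) \<and>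
     (\<forall>a b. a \<in> F \<and> b \<in> F \<longrightarrow> inf a b \<in> F)"

definition directed_set :: "'a::complete_lattice set \<Rightarrow> bool" where
  "directed_set D \<longleftrightarrow> D \<noteq> {} \<and> (\<forall>x\<in>D. \<forall>y\<in>D. \<exists>z\<in>D. x \<le> z \<and> y \<le> z)"

definition scott_open_filter :: "'a::complete_lattice set \<Rightarrow> bool" where
  "scott_open_filter F \<longleftrightarrow> is_filter F \<and>
     (\<forall>D. directed_set D \<and> Sup D \<in> F \<longrightarrow> D \<inter> F \<noteq> {})"

text \<open>Intersections of families of Scott-open filters (empty intersection = L).\<close>
definition IntSO :: "'a::complete_lattice set set" where
  "IntSO = {\<Inter>\<F> | \<F>. \<F> \<subseteq> {F. scott_open_filter F}}"

definition nu :: "'a::complete_lattice set \<Rightarrow> 'a set" where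
  "nu F = (\<Inter>a\<in>F. open_sl a)"

end

theory Submission
  imports Defs
begin

lemma le_eqI': "(\<And>c. c \<le> x \<longleftrightarrow> c \<le> y) \<Longrightarrow> x = (y::'a::order)"
  by (metis order.antisym order.refl)

context
  assumes fr: "is_frame TYPE('a::complete_lattice)"
begin

lemma frame_dist: "inf c (Sup D) = (SUP d\<in>D. inf c (d::'a))"
proof -
  have "inf (Sup D) c = (SUP d\<in>D. inf d c)" using fr by (simp add: is_frame_def)
  then show ?thesis by (simp add: inf_commute)
qed

lemma himp_le: "c \<le> himp a b \<longleftrightarrow> inf c a \<le> (b::'a)"
proof
  assume "inf c a \<le> b" then show "c \<le> himp a b" unfolding himp_def by (simp add: Sup_upper)
next
  assume h: "c \<le> himp a b"
  have "inf c a \<le> inf (himp a b) a" using h by (simp add: le_infI1)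
  also have "\<dots> = inf a (Sup {c. inf c a \<le> b})" by (simp add: himp_def inf_commute)
  also have "\<dots> = (SUP d\<in>{c. inf c a \<le> b}. inf a d)" by (rule frame_dist)
  also have "\<dots> \<le> b" by (auto intro!: SUP_least simp: inf_commute)
  finally show "inf c a \<le> b" .
qed

lemma himp_Inf: "himp a (Inf X) = Inf ((\<lambda>x. himp a x) ` (X::'a set))"
  by (rule le_eqI') (auto simp: himp_le le_Inf_iff)

lemma himp_himp: "himp b (himp a x) = himp (inf b a) (x::'a)"
  by (rule le_eqI') (simp add: himp_le inf_assoc)

lemma himp_comm: "himp a (himp c b) = himp c (himp a (b::'a))"
  by (simp add: himp_himp inf_commute)

lemma himp_Sup: "himp (Sup D) x = Inf ((\<lambda>d. himp d x) ` (D::'a set))"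
  by (rule le_eqI') (auto simp: himp_le le_Inf_iff frame_dist SUP_le_iff)

lemma himp_top: "himp top (b::'a) = b"
  by (rule le_eqI') (simp add: himp_le)

lemma himp_triv: "a \<le> b \<Longrightarrow> himp a (b::'a) = top"
  by (simp add: himp_le top_unique[symmetric] le_infI2)

lemma mem_open: "x \<in> open_sl a \<longleftrightarrow> himp a x = (x::'a)"
  unfolding open_sl_def by (auto simp: himp_himp) (metis)

lemma open_mono: "a \<le> b \<Longrightarrow> open_sl a \<subseteq> open_sl (b::'a)"
  by (auto simp: mem_open) (metis himp_himp inf.absorb2)

lemma open_inf: "open_sl a \<inter> open_sl b \<subseteq> open_sl (inf a (b::'a))"
  by (auto simp: mem_open) (metis himp_himp)

lemma open_Inf: "X \<subseteq> open_sl a \<Longrightarrow> Inf X \<in> open_sl (a::'a)"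
  unfolding mem_open himp_Inf using mem_open by (metis (no_types, lifting) image_cong image_ident subsetD)

lemma open_top: "open_sl (top::'a) = UNIV"
  by (auto simp: mem_open himp_top)

lemma open_Sup_sub: "open_sl (Sup D) \<subseteq> sl_join (open_sl ` (D::'a set))"
proof
  fix x assume "x \<in> open_sl (Sup D)"
  then have x: "x = Inf ((\<lambda>d. himp d x) ` D)" by (simp add: mem_open himp_Sup)
  have "(\<lambda>d. himp d x) ` D \<subseteq> \<Union>(open_sl ` D)" unfolding open_sl_def by blast
  then show "x \<in> sl_join (open_sl ` D)" unfolding sl_join_def using x by blast
qed

lemma join_sub: "sl_join C \<subseteq> open_sl a \<longleftrightarrow> (\<forall>S\<in>C. S \<subseteq> open_sl (a::'a))"
proof
  assume h: "sl_join C \<subseteq> open_sl a"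
  show "\<forall>S\<in>C. S \<subseteq> open_sl a"
  proof (intro ballI subsetI)
    fix S x assume "S \<in> C" "x \<in> S"
    then have "Inf {x} \<in> sl_join C" unfolding sl_join_def by blast
    then show "x \<in> open_sl a" using h by auto
  qed
next
  assume "\<forall>S\<in>C. S \<subseteq> open_sl a"
  then show "sl_join C \<subseteq> open_sl a" unfolding sl_join_def by (auto intro!: open_Inf)
qed

lemma join_open_sub: "sl_join (open_sl ` A) \<subseteq> open_sl (Sup (A::'a set))"
  unfolding join_sub by (auto intro: open_mono[THEN subsetD] Sup_upper)

lemma fit_sub: "fit T \<subseteq> open_sl a \<longleftrightarrow> T \<subseteq> open_sl (a::'a)"
  unfolding fit_def by blast

lemma fit_fit: "fit (fit T) = fit (T::'a set)"
  unfolding fit_def[of "fit T"] fit_sub unfolding fit_def by simp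

lemma top_in_filter: "is_filter F \<Longrightarrow> (top::'a) \<in> F"
  unfolding is_filter_def by auto

lemma zorn_step:
  assumes F: "scott_open_filter (F::'a set)" and b: "b \<notin> F"
  shows "\<exists>m. b \<le> m \<and> m \<notin> F \<and> (\<forall>a\<in>F. himp a m = m)"
proof -
  let ?U = "{m. b \<le> m \<and> m \<notin> F}"
  have po: "partial_order_on ?U (relation_of (\<le>) ?U)"
    by (rule partial_order_on_relation_ofI) auto
  have "\<exists>m\<in>?U. \<forall>a\<in>?U. m \<le> a \<longrightarrow> a = m"
  proof (rule predicate_Zorn[OF po])
    fix C assume C: "C \<in> Chains (relation_of (\<le>) ?U)"
    then have CU: "C \<subseteq> ?U" and ch: "\<forall>x\<in>C. \<forall>y\<in>C. x \<le> y \<or> y \<le> x"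
      unfolding Chains_def relation_of_def by auto
    show "\<exists>u\<in>?U. \<forall>a\<in>C. a \<le> u"
    proof (cases "C = {}")
      case True then show ?thesis using b by auto
    next
      case False
      then have "directed_set C" unfolding directed_set_def using ch by blast
      moreover have "C \<inter> F = {}" using CU by auto
      ultimately have "Sup C \<notin> F" using F unfolding scott_open_filter_def by blast
      moreover from False CU have "b \<le> Sup C" by (metis (mono_tags) Sup_upper2 all_not_in_conv mem_Collect_eq subsetD)
      ultimately show ?thesis by (auto intro: Sup_upper)
    qed
  qed
  then obtain m where mU: "b \<le> m" "m \<notin> F" and max: "\<forall>a\<in>?U. m \<le> a \<longrightarrow> a = m" by auto
  have "himp a m = m" if aF: "a \<in> F" for a
  proof (rule ccontr)
    assume ne: "himp a m \<noteq> m"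
    have "m \<le> himp a m" by (simp add: himp_le)
    then have "himp a m \<in> F" using max ne mU by (metis (mono_tags) mem_Collect_eq order_trans)
    then have "inf a (himp a m) \<in> F" using F aF unfolding scott_open_filter_def is_filter_def by blast
    moreover have "inf a (himp a m) \<le> m" by (metis himp_le inf_commute order.refl)
    ultimately have "m \<in> F" using F unfolding scott_open_filter_def is_filter_def by blast
    then show False using mU by simp
  qed
  then show ?thesis using mU by blast
qed

lemma so_recover:
  assumes F: "scott_open_filter (F::'a set)" and sub: "nu F \<subseteq> open_sl b"
  shows "b \<in> F"
proof (rule ccontr)
  assume "b \<notin> F"
  then obtain m where m: "b \<le> m" "m \<notin> F" "\<forall>a\<in>F. himp a m = m" using zorn_step[OF F] by blast
  then have "m \<in> nu F" unfolding nu_def by (auto simp: mem_open)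
  then have "himp b m = m" using sub by (auto simp: mem_open)
  then have "m = top" using himp_triv[OF m(1)] by simp
  then show False using m(2) top_in_filter F unfolding scott_open_filter_def by auto
qed

lemma intso_recover:
  assumes "F \<in> (IntSO::'a set set)"
  shows "{a. nu F \<subseteq> open_sl a} = F"
proof -
  obtain Fs where Fs: "F = \<Inter>Fs" "Fs \<subseteq> {F. scott_open_filter F}" using assms unfolding IntSO_def by blast
  show ?thesis
  proof
    show "F \<subseteq> {a. nu F \<subseteq> open_sl a}" unfolding nu_def by auto
    show "{a. nu F \<subseteq> open_sl a} \<subseteq> F"
    proof
      fix b assume b: "b \<in> {a. nu F \<subseteq> open_sl a}"
      have "b \<in> G" if G: "G \<in> Fs" for G
      proof -
        have "nu G \<subseteq> nu F" using G Fs(1) unfolding nu_def by auto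
        then show ?thesis using so_recover b G Fs(2) by blast
      qed
      then show "b \<in> F" using Fs(1) by blast
    qed
  qed
qed

lemma compact_filter:
  assumes K: "compact_sl (K::'a set)"
  shows "scott_open_filter {a. K \<subseteq> open_sl a}"
  unfolding scott_open_filter_def is_filter_def
proof (intro conjI allI impI)
  show "{a. K \<subseteq> open_sl a} \<noteq> {}" using open_top by auto
next
  fix a b :: 'a assume "a \<in> {a. K \<subseteq> open_sl a} \<and> a \<le> b"
  then show "b \<in> {a. K \<subseteq> open_sl a}" using open_mono by blast
next
  fix a b :: 'a assume "a \<in> {a. K \<subseteq> open_sl a} \<and> b \<in> {a. K \<subseteq> open_sl a}"
  then show "inf a b \<in> {a. K \<subseteq> open_sl a}" using open_inf by blast
next
  fix D :: "'a set" assume h: "directed_set D \<and> Sup D \<in> {a. K \<subseteq> open_sl a}"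
  then have "K \<subseteq> sl_join (open_sl ` D)" using open_Sup_sub by blast
  then obtain B where B: "finite B" "B \<subseteq> D" "K \<subseteq> sl_join (open_sl ` B)"
    using K unfolding compact_sl_def by blast
  have dir: "directed_set D" using h by blast
  have "\<exists>d\<in>D. \<forall>x\<in>B. x \<le> d" using B(1,2)
  proof (induction B rule: finite_induct)
    case empty then show ?case using dir unfolding directed_set_def by auto
  next
    case (insert x B)
    then obtain d where "d \<in> D" "\<forall>y\<in>B. y \<le> d" by auto
    moreover obtain z where "z \<in> D" "x \<le> z" "d \<le> z" using dir insert(4) \<open>d \<in> D\<close> unfolding directed_set_def by blast
    show ?case
    proof (intro bexI[of _ z] ballI)
      fix y assume "y \<in> insert x B"
      show "y \<le> z"
      proof (cases "y = x")
        case True then show ?thesis using \<open>x \<le> z\<close> by simp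
      next
        case False then have "y \<le> d" using \<open>y \<in> insert x B\<close> \<open>\<forall>y\<in>B. y \<le> d\<close> by blast
        then show ?thesis using \<open>d \<le> z\<close> by (rule order.trans)
      qed
    qed (rule \<open>z \<in> D\<close>)
  qed
  then obtain d where d: "d \<in> D" "\<forall>x\<in>B. x \<le> d" by blast
  have "sl_join (open_sl ` B) \<subseteq> open_sl d" unfolding join_sub using d open_mono by blast
  then have "d \<in> {a. K \<subseteq> open_sl a}" using B(3) by auto
  then show "D \<inter> {a. K \<subseteq> open_sl a} \<noteq> {}" using d by blast
qed

lemma so_compact:
  assumes F: "scott_open_filter (F::'a set)"
  shows "compact_sl (nu F)"
  unfolding compact_sl_def
proof (intro conjI allI impI)
  show "sublocale_of (nu F)" unfolding sublocale_of_def
  proof (intro conjI allI impI)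
    fix A assume "A \<subseteq> nu F" then show "Inf A \<in> nu F" unfolding nu_def by (auto intro!: open_Inf)
  next
    fix a s assume "s \<in> nu F" then show "himp a s \<in> nu F" unfolding nu_def
      by (simp add: mem_open) (metis himp_comm)
  qed
next
  fix A assume h: "nu F \<subseteq> sl_join (open_sl ` A)"
  let ?D = "{Sup B | B. finite B \<and> B \<subseteq> A}"
  have "nu F \<subseteq> open_sl (Sup A)" using h join_open_sub by blast
  then have SA: "Sup A \<in> F" using so_recover F by blast
  have dir: "directed_set ?D" unfolding directed_set_def
  proof (intro conjI ballI)
    have "Sup {} \<in> ?D" by (rule CollectI, rule exI[of _ "{}"]) simp
    then show "?D \<noteq> {}" by blast
  next
    fix x y assume "x \<in> ?D" "y \<in> ?D"
    then obtain B1 B2 where B: "x = Sup B1" "finite B1" "B1 \<subseteq> A" "y = Sup B2" "finite B2" "B2 \<subseteq> A" by blast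
    have "Sup (B1 \<union> B2) \<in> ?D" using B by (intro CollectI exI[of _ "B1 \<union> B2"]) simp
    moreover have "x \<le> Sup (B1 \<union> B2)" unfolding B(1) by (rule Sup_subset_mono) blast
    moreover have "y \<le> Sup (B1 \<union> B2)" unfolding B(4) by (rule Sup_subset_mono) blast
    ultimately show "\<exists>z\<in>?D. x \<le> z \<and> y \<le> z" by blast
  qed
  have "Sup ?D = Sup A"
  proof (rule order.antisym)
    show "Sup ?D \<le> Sup A" by (rule Sup_least) (clarsimp simp: Sup_subset_mono)
    show "Sup A \<le> Sup ?D"
    proof (rule Sup_least)
      fix x assume "x \<in> A"
      then have "Sup {x} \<in> ?D" by (intro CollectI exI[of _ "{x}"]) simp
      then have "Sup {x} \<le> Sup ?D" by (rule Sup_upper)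
      then have "x \<le> Sup ?D" by simp
      then show "x \<le> Sup ?D" .
    qed
  qed
  moreover have "\<forall>D. directed_set D \<and> Sup D \<in> F \<longrightarrow> D \<inter> F \<noteq> {}"
    using F unfolding scott_open_filter_def by blast
  ultimately have "?D \<inter> F \<noteq> {}" using dir SA by simp
  then obtain B where B: "finite B" "B \<subseteq> A" "Sup B \<in> F" by blast
  then have "nu F \<subseteq> open_sl (Sup B)" unfolding nu_def by auto
  then show "\<exists>B. finite B \<and> B \<subseteq> A \<and> nu F \<subseteq> sl_join (open_sl ` B)"
    using B open_Sup_sub by blast
qed

lemma nu_in_fitSk:
  assumes "F \<in> (IntSO::'a set set)"
  shows "nu F \<in> fit ` Sk"
proof -
  obtain Fs where Fs: "F = \<Inter>Fs" "Fs \<subseteq> {F. scott_open_filter F}" using assms unfolding IntSO_def by blast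
  let ?T = "sl_join (nu ` Fs)"
  have "nu ` Fs \<subseteq> {S. compact_sl S}" using Fs(2) so_compact by blast
  then have "?T \<in> Sk" unfolding Sk_def by (intro CollectI exI[of _ "nu ` Fs"]) simp
  moreover have "fit ?T = nu F"
  proof -
    have "?T \<subseteq> open_sl a \<longleftrightarrow> a \<in> F" for a
    proof -
      have "?T \<subseteq> open_sl a \<longleftrightarrow> (\<forall>G\<in>Fs. nu G \<subseteq> open_sl a)" by (simp add: join_sub)
      also have "\<dots> \<longleftrightarrow> (\<forall>G\<in>Fs. a \<in> G)"
      proof (intro iffI ballI)
        fix G assume "\<forall>G\<in>Fs. nu G \<subseteq> open_sl a" "G \<in> Fs"
        then show "a \<in> G" using so_recover Fs(2) by blast
      next
        fix G assume "\<forall>G\<in>Fs. a \<in> G" "G \<in> Fs"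
        then show "nu G \<subseteq> open_sl a" unfolding nu_def by blast
      qed
      finally show ?thesis using Fs(1) by blast
    qed
    then have "{open_sl a |a. ?T \<subseteq> open_sl a} = open_sl ` F" by blast
    then show ?thesis unfolding fit_def nu_def by simp
  qed
  ultimately show ?thesis by blast
qed

lemma fitSk_part:
  assumes "S \<in> fit ` (Sk::'a set set)"
  shows "{a. S \<subseteq> open_sl a} \<in> IntSO \<and> nu {a. S \<subseteq> open_sl a} = S"
proof -
  obtain C where C: "S = fit (sl_join C)" "C \<subseteq> {S. compact_sl S}" using assms unfolding Sk_def by blast
  have eq: "{a. S \<subseteq> open_sl a} = \<Inter>((\<lambda>K. {a. K \<subseteq> open_sl a}) ` C)"
    using C(1) by (auto simp: fit_sub join_sub)
  have "{a. S \<subseteq> open_sl a} \<in> IntSO" unfolding IntSO_def eq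
    using C(2) compact_filter by blast
  moreover have "nu {a. S \<subseteq> open_sl a} = S"
  proof -
    have "nu {a. S \<subseteq> open_sl a} = fit S" unfolding nu_def fit_def by auto
    then show ?thesis using C(1) fit_fit by simp
  qed
  ultimately show ?thesis by blast
qed

end

theorem mainTheorem14:
  assumes "is_frame TYPE('a::complete_lattice)"
  shows "bij_betw (nu :: 'a set \<Rightarrow> 'a set) IntSO (fit ` Sk)
     \<and> (\<forall>F\<in>(IntSO :: 'a set set). \<forall>G\<in>IntSO. G \<subseteq> F \<longleftrightarrow> nu F \<subseteq> nu G)
     \<and> (\<forall>S\<in>fit ` (Sk :: 'a set set). {a. S \<subseteq> open_sl a} \<in> IntSO \<and> nu {a. S \<subseteq> open_sl a} = S)
     \<and> (\<forall>F\<in>(IntSO :: 'a set set). {a. nu F \<subseteq> open_sl a} = F)"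
proof (intro conjI ballI)
  note rec = intso_recover[OF assms]
  show "bij_betw (nu :: 'a set \<Rightarrow> 'a set) IntSO (fit ` Sk)"
    unfolding bij_betw_def
  proof
    show "inj_on (nu :: 'a set \<Rightarrow> 'a set) IntSO"
    proof (rule inj_onI)
      fix F G :: "'a set" assume "F \<in> IntSO" "G \<in> IntSO" "nu F = nu G"
      then have "{a. nu F \<subseteq> open_sl a} = F" "{a. nu G \<subseteq> open_sl a} = G" using rec by blast+
      then show "F = G" using \<open>nu F = nu G\<close> by metis
    qed
    show "nu ` IntSO = fit ` (Sk :: 'a set set)"
    proof
      show "nu ` IntSO \<subseteq> fit ` (Sk :: 'a set set)" using nu_in_fitSk[OF assms] by (rule image_subsetI)
      show "fit ` (Sk :: 'a set set) \<subseteq> nu ` IntSO"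
      proof
        fix S :: "'a set" assume "S \<in> fit ` Sk"
        then have "{a. S \<subseteq> open_sl a} \<in> IntSO" "nu {a. S \<subseteq> open_sl a} = S"
          using fitSk_part[OF assms] by auto
        then show "S \<in> nu ` IntSO" by (intro rev_image_eqI[of "{a. S \<subseteq> open_sl a}"]) auto
      qed
    qed
  qed
next
  fix F G :: "'a set" assume F: "F \<in> IntSO" and G: "G \<in> IntSO"
  show "G \<subseteq> F \<longleftrightarrow> nu F \<subseteq> nu G"
  proof
    assume "G \<subseteq> F" then show "nu F \<subseteq> nu G" unfolding nu_def by auto
  next
    assume h: "nu F \<subseteq> nu G"
    have "G \<subseteq> {a. nu G \<subseteq> open_sl a}" using intso_recover[OF assms G] by simp
    also have "\<dots> \<subseteq> {a. nu F \<subseteq> open_sl a}" using h by auto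
    finally show "G \<subseteq> F" using intso_recover[OF assms F] by simp
  qed
next
  fix S :: "'a set" assume "S \<in> fit ` Sk"
  then show "{a. S \<subseteq> open_sl a} \<in> IntSO" "nu {a. S \<subseteq> open_sl a} = S"
    using fitSk_part[OF assms] by auto
next
  fix F :: "'a set" assume "F \<in> IntSO"
  then show "{a. nu F \<subseteq> open_sl a} = F" by (rule intso_recover[OF assms])
qed

end
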